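(* Every finite groupoid $\langle A;\cdot\rangle$ with an identity element which is an Abelian algebra is a Hamiltonian algebra.
   Context: A groupoid is an algebra $\langle A;\cdot\rangle$ with one binary operation (its subalgebras are the nonempty subsets closed under $\cdot$); an identity element is $1\in A$ with $1\cdot a=a\cdot 1=a$ for all $a$. A polynomial operation of an algebra is an operation obtained from a term by substituting elements of the algebra for some of its variables. An algebra is called Abelian if for every polynomial operation $t(x,y_1,\ldots,y_n)$ and all elements $u,v,c_1,\ldots,c_n,d_1,\ldots,d_n$ of the algebra, $t(u,c_1,\ldots,c_n)=t(u,d_1,\ldots,d_n)$ implies $t(v,c_1,\ldots,c_n)=t(v,d_1,\ldots,d_n)$. An algebra is called Hamiltonian if the universe of every subalgebra is an equivalence class (block) of some congruence of the algebra. *)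

theory Defs
  imports Main
begin

definition groupoid :: "'a set \<Rightarrow> ('a \<Rightarrow> 'a \<Rightarrow> 'a) \<Rightarrow> bool" where
  "groupoid A m \<longleftrightarrow> A \<noteq> {} \<and> (\<forall>x\<in>A. \<forall>y\<in>A. m x y \<in> A)"

definition is_identity :: "'a set \<Rightarrow> ('a \<Rightarrow> 'a \<Rightarrow> 'a) \<Rightarrow> 'a \<Rightarrow> bool" where
  "is_identity A m e \<longleftrightarrow> e \<in> A \<and> (\<forall>a\<in>A. m e a = a \<and> m a e = a)"

text \<open>Terms in the groupoid signature, with variables indexed by nat and
constants (elements of the algebra) allowed: these describe polynomial operations.\<close>

datatype 'a gterm = Var nat | Const 'a | Mul "'a gterm" "'a gterm"

fun consts_of :: "'a gterm \<Rightarrow> 'a set" where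
  "consts_of (Var i) = {}"
| "consts_of (Const a) = {a}"
| "consts_of (Mul s t) = consts_of s \<union> consts_of t"

fun eval :: "('a \<Rightarrow> 'a \<Rightarrow> 'a) \<Rightarrow> (nat \<Rightarrow> 'a) \<Rightarrow> 'a gterm \<Rightarrow> 'a" where
  "eval m \<rho> (Var i) = \<rho> i"
| "eval m \<rho> (Const a) = a"
| "eval m \<rho> (Mul s t) = m (eval m \<rho> s) (eval m \<rho> t)"

text \<open>Polynomial operations: terms whose constants lie in A. Variable 0 plays
the role of x, the remaining variables the role of y_1, ..., y_n.\<close>

definition abelian :: "'a set \<Rightarrow> ('a \<Rightarrow> 'a \<Rightarrow> 'a) \<Rightarrow> bool" where
  "abelian A m \<longleftrightarrow>
    (\<forall>t u v c d. consts_of t \<subseteq> A \<longrightarrow> u \<in> A \<longrightarrow> v \<in> A \<longrightarrow>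
        range c \<subseteq> A \<longrightarrow> range d \<subseteq> A \<longrightarrow>
        eval m (c(0 := u)) t = eval m (d(0 := u)) t \<longrightarrow>
        eval m (c(0 := v)) t = eval m (d(0 := v)) t)"

definition subalgebra :: "'a set \<Rightarrow> ('a \<Rightarrow> 'a \<Rightarrow> 'a) \<Rightarrow> 'a set \<Rightarrow> bool" where
  "subalgebra A m B \<longleftrightarrow> B \<noteq> {} \<and> B \<subseteq> A \<and> (\<forall>x\<in>B. \<forall>y\<in>B. m x y \<in> B)"

definition congruence :: "'a set \<Rightarrow> ('a \<Rightarrow> 'a \<Rightarrow> 'a) \<Rightarrow> 'a rel \<Rightarrow> bool" where
  "congruence A m \<theta> \<longleftrightarrow> equiv A \<theta> \<and>
     (\<forall>a b c d. (a, b) \<in> \<theta> \<longrightarrow> (c, d) \<in> \<theta> \<longrightarrow> (m a c, m b d) \<in> \<theta>)"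

definition hamiltonian :: "'a set \<Rightarrow> ('a \<Rightarrow> 'a \<Rightarrow> 'a) \<Rightarrow> bool" where
  "hamiltonian A m \<longleftrightarrow>
    (\<forall>B. subalgebra A m B \<longrightarrow> (\<exists>\<theta>. congruence A m \<theta> \<and> B \<in> A // \<theta>))"

end

theory Submission
  imports Defs
begin

lemma ab_use:
  assumes "abelian A m" "consts_of t \<subseteq> A" "u \<in> A" "v \<in> A" "range c \<subseteq> A" "range d \<subseteq> A"
    "eval m (c(0 := u)) t = eval m (d(0 := u)) t"
  shows "eval m (c(0 := v)) t = eval m (d(0 := v)) t"
  using assms unfolding abelian_def by blast

lemma rng: "e \<in> A \<Longrightarrow> x \<in> A \<Longrightarrow> y \<in> A \<Longrightarrow> range ((\<lambda>_. e)(1 := x, 2 := y)) \<subseteq> A"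
  by auto

theorem mainTheorem3:
  fixes A :: "'a set" and m :: "'a \<Rightarrow> 'a \<Rightarrow> 'a" and e :: 'a
  assumes "groupoid A m"
    and "finite A"
    and "is_identity A m e"
    and "abelian A m"
  shows "hamiltonian A m"
proof -
  have cl: "\<And>x y. x \<in> A \<Longrightarrow> y \<in> A \<Longrightarrow> m x y \<in> A" using assms(1) unfolding groupoid_def by blast
  have eA: "e \<in> A" and el: "\<And>x. x \<in> A \<Longrightarrow> m e x = x" and er: "\<And>x. x \<in> A \<Longrightarrow> m x e = x"
    using assms(3) unfolding is_identity_def by auto
  have cancel: "x = y" if "a \<in> A" "x \<in> A" "y \<in> A" "m a x = m a y" for a x y
  proof -
    have "eval m (((\<lambda>_. e)(1 := x, 2 := e))(0 := e)) (Mul (Var 0) (Var 1))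
        = eval m (((\<lambda>_. e)(1 := y, 2 := e))(0 := e)) (Mul (Var 0) (Var 1))"
      by (rule ab_use[OF assms(4) _ that(1) eA rng rng]) (use that eA in auto)
    thus ?thesis using el that by simp
  qed
  have comm: "m a b = m b a" if "a \<in> A" "b \<in> A" for a b
  proof -
    have "eval m (((\<lambda>_. e)(1 := e, 2 := a))(0 := b)) (Mul (Mul (Var 1) (Var 0)) (Var 2))
        = eval m (((\<lambda>_. e)(1 := a, 2 := e))(0 := b)) (Mul (Mul (Var 1) (Var 0)) (Var 2))"
      by (rule ab_use[OF assms(4) _ eA that(2) rng rng]) (use that eA el er in auto)
    thus ?thesis using el er that cl by simp
  qed
  have assoc: "m (m a b) c = m a (m b c)" if "a \<in> A" "b \<in> A" "c \<in> A" for a b c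
  proof -
    have "eval m (((\<lambda>_. e)(1 := a, 2 := c))(0 := b)) (Mul (Var 1) (Mul (Var 0) (Var 2)))
        = eval m (((\<lambda>_. e)(1 := c, 2 := a))(0 := b)) (Mul (Var 1) (Mul (Var 0) (Var 2)))"
      by (rule ab_use[OF assms(4) _ eA that(2) rng rng]) (use that eA el er comm in auto)
    hence "m a (m b c) = m c (m b a)" by simp
    thus ?thesis using comm that cl by metis
  qed
  show ?thesis unfolding hamiltonian_def
  proof (intro allI impI)
    fix B assume sB: "subalgebra A m B"
    hence Bne: "B \<noteq> {}" and BA: "B \<subseteq> A" and Bcl: "\<And>x y. x \<in> B \<Longrightarrow> y \<in> B \<Longrightarrow> m x y \<in> B"
      unfolding subalgebra_def by auto
    have finB: "finite B" using BA assms(2) finite_subset by blast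
    have inv: "\<exists>\<delta>\<in>B. m g \<delta> = e" if gB: "g \<in> B" for g
    proof -
      have inj: "inj_on (m g) B" using cancel gB BA by (auto simp: inj_on_def)
      have "m g ` B \<subseteq> B" using Bcl gB by auto
      hence im: "m g ` B = B" using inj finB by (simp add: endo_inj_surj)
      then obtain x where x: "x \<in> B" "m g x = g" using gB by (metis imageE)
      have "x = e" using cancel[of g x e] x gB BA er eA by auto
      hence "e \<in> B" using x by simp
      thus ?thesis using im by (metis imageE)
    qed
    define \<theta> where "\<theta> = {(a, b). a \<in> A \<and> b \<in> A \<and> (\<exists>\<beta>\<in>B. \<exists>\<gamma>\<in>B. m a \<beta> = m b \<gamma>)}"
    have cong: "congruence A m \<theta>"
      unfolding congruence_def equiv_def
    proof (intro conjI allI impI)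
      show "refl_on A \<theta>" unfolding refl_on_def \<theta>_def using Bne by auto
      show "\<theta> \<subseteq> A \<times> A" unfolding \<theta>_def by auto
      show "sym \<theta>" unfolding sym_def \<theta>_def by (auto, metis)
      show "trans \<theta>" unfolding trans_def \<theta>_def
      proof (clarsimp)
        fix a b c \<beta> \<gamma> \<delta> \<epsilon>
        assume h: "a \<in> A" "b \<in> A" "c \<in> A" "\<beta> \<in> B" "\<gamma> \<in> B" "m a \<beta> = m b \<gamma>" "\<delta> \<in> B" "\<epsilon> \<in> B" "m b \<delta> = m c \<epsilon>"
        have A': "\<beta> \<in> A" "\<gamma> \<in> A" "\<delta> \<in> A" "\<epsilon> \<in> A" using h BA by auto
        have "m a (m \<beta> \<delta>) = m (m a \<beta>) \<delta>" using assoc[of a \<beta> \<delta>] h A' by simp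
        also have "\<dots> = m (m b \<gamma>) \<delta>" using h by simp
        also have "\<dots> = m b (m \<delta> \<gamma>)" using assoc[of b \<gamma> \<delta>] comm[of \<gamma> \<delta>] h A' by simp
        also have "\<dots> = m (m b \<delta>) \<gamma>" using assoc[of b \<delta> \<gamma>] h A' by simp
        also have "\<dots> = m (m c \<epsilon>) \<gamma>" using h by simp
        also have "\<dots> = m c (m \<epsilon> \<gamma>)" using assoc[of c \<epsilon> \<gamma>] h A' by simp
        finally show "\<exists>\<beta>\<in>B. \<exists>\<gamma>\<in>B. m a \<beta> = m c \<gamma>" using Bcl h by blast
      qed
      fix a b c d assume ab: "(a, b) \<in> \<theta>" and cd: "(c, d) \<in> \<theta>"
      then obtain \<beta> \<gamma> \<delta> \<epsilon> where h: "a \<in> A" "b \<in> A" "c \<in> A" "d \<in> A" "\<beta> \<in> B" "\<gamma> \<in> B" "m a \<beta> = m b \<gamma>"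
        "\<delta> \<in> B" "\<epsilon> \<in> B" "m c \<delta> = m d \<epsilon>" unfolding \<theta>_def by auto
      have A': "\<beta> \<in> A" "\<gamma> \<in> A" "\<delta> \<in> A" "\<epsilon> \<in> A" using h BA by auto
      have sw: "m (m x y) (m z w) = m (m x z) (m y w)" if "x \<in> A" "y \<in> A" "z \<in> A" "w \<in> A" for x y z w
        using that assoc comm cl by metis
      have "m (m a c) (m \<beta> \<delta>) = m (m a \<beta>) (m c \<delta>)" using sw h A' by simp
      also have "\<dots> = m (m b d) (m \<gamma> \<epsilon>)" using sw h A' by simp
      finally show "(m a c, m b d) \<in> \<theta>" unfolding \<theta>_def using h Bcl cl by blast
    qed
    obtain b0 where b0: "b0 \<in> B" using Bne by blast
    have "\<theta> `` {b0} = B"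
    proof
      show "B \<subseteq> \<theta> `` {b0}" unfolding \<theta>_def using b0 BA comm by blast
      show "\<theta> `` {b0} \<subseteq> B"
      proof
        fix a assume "a \<in> \<theta> `` {b0}"
        then obtain \<beta> \<gamma> where h: "a \<in> A" "\<beta> \<in> B" "\<gamma> \<in> B" "m b0 \<beta> = m a \<gamma>" unfolding \<theta>_def by auto
        obtain \<delta> where d: "\<delta> \<in> B" "m \<gamma> \<delta> = e" using inv h by blast
        have "a = m (m a \<gamma>) \<delta>" using assoc[of a \<gamma> \<delta>] h d BA er[of a] by (metis subsetD)
        also have "\<dots> \<in> B" using h(4) Bcl b0 h d by metis
        finally show "a \<in> B" .
      qed
    qed
    hence "B \<in> A // \<theta>" using b0 BA unfolding quotient_def by blast
    thus "\<exists>\<theta>. congruence A m \<theta> \<and> B \<in> A // \<theta>" using cong by blast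
  qed
qed

end
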